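(* Consider the multivariate linear model ${\bf y}_i={B^*}^T{\bf x}_i+\boldsymbol\epsilon_i$, $i=1,\dots,n$, with $B^*=(\boldsymbol\beta^*_1,\dots,\boldsymbol\beta^*_r)\in\mathbb{R}^{p\times r}$ an $s$-sparse matrix (all of whose columns are sparse), errors $\boldsymbol\epsilon_i$ with mean zero independent of the covariates, and $E[X^TX/n]\in\mathbb{R}^{p\times p}$ positive definite. Fix a partition $D=(D_1,\dots,D_Q)$ of $\{1,\dots,r\}$ and $\gamma\ge0$. Define $$\acute B=(\acute{\boldsymbol\beta}_1,\dots,\acute{\boldsymbol\beta}_r)=\arg\min_{\boldsymbol\beta_1,\dots,\boldsymbol\beta_r\in\mathbb{R}^p} E\left(\frac{1}{2n}\sum_{i=1}^n\sum_{c=1}^r (y_{ic}-{\bf x}_i^T\boldsymbol\beta_c)^2+\frac{\gamma}{2n}\sum_{q=1}^Q\frac{1}{|D_q|}\sum_{l,m\in D_q}\|X(\boldsymbol\beta_l-\boldsymbol\beta_m)\|_2^2\right).$$ Then for every $q$ and $l\in D_q$, $$\acute{\boldsymbol\beta}_l=\boldsymbol\beta^*_l+\frac{2\gamma}{(1+2\gamma)|D_q|}\sum_{c\in D_q,\,c\neq l}(\boldsymbol\beta^*_c-\boldsymbol\beta^*_l).$$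
   Context: $X=({\bf x}_1,\dots,{\bf x}_n)^T\in\mathbb{R}^{n\times p}$ is the design matrix, $y_{ic}$ the $c$th coordinate of ${\bf y}_i$. "$s$-sparse" means $B^*$ has $s$ nonzero entries. The inner sum $\sum_{l,m\in D_q}$ runs over all ordered pairs in $D_q$. The expectation is over the data generated by the model. *)

theory Defs
  imports "HOL-Probability.Probability"
begin

text \<open>Response of sample i, coordinate c, in the multivariate linear model
  y_i = B*^T x_i + eps_i, where Bstar c is the c-th column of B*.\<close>
definition resp :: "(nat \<Rightarrow> 'w \<Rightarrow> real^'p) \<Rightarrow> (nat \<Rightarrow> 'w \<Rightarrow> real^'r) \<Rightarrow> ('r \<Rightarrow> real^'p)
    \<Rightarrow> nat \<Rightarrow> 'w \<Rightarrow> 'r \<Rightarrow> real" where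
  "resp x eps Bstar i \<omega> c = x i \<omega> \<bullet> Bstar c + eps i \<omega> $ c"

definition nnz :: "('r::finite \<Rightarrow> real^'p::finite) \<Rightarrow> nat" where
  "nnz B = card {(j, c). B c $ j \<noteq> 0}"

definition gram :: "'w measure \<Rightarrow> nat \<Rightarrow> (nat \<Rightarrow> 'w \<Rightarrow> real^'p) \<Rightarrow> 'p \<Rightarrow> 'p \<Rightarrow> real" where
  "gram M n x j k = integral\<^sup>L M (\<lambda>\<omega>. (\<Sum>i<n. x i \<omega> $ j * x i \<omega> $ k) / real n)"

definition pos_def :: "('p::finite \<Rightarrow> 'p \<Rightarrow> real) \<Rightarrow> bool" where
  "pos_def G \<longleftrightarrow> (\<forall>v::real^'p. v \<noteq> 0 \<longrightarrow> (\<Sum>j\<in>UNIV. \<Sum>k\<in>UNIV. v $ j * G j k * v $ k) > 0)"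

text \<open>The expected penalized objective; the groups of the partition are the
  elements of D; the inner double sum runs over ordered pairs.\<close>
definition objective ::
  "'w measure \<Rightarrow> nat \<Rightarrow> (nat \<Rightarrow> 'w \<Rightarrow> real^'p) \<Rightarrow> (nat \<Rightarrow> 'w \<Rightarrow> real^'r::finite)
    \<Rightarrow> ('r \<Rightarrow> real^'p) \<Rightarrow> 'r set set \<Rightarrow> real \<Rightarrow> ('r \<Rightarrow> real^'p) \<Rightarrow> real" where
  "objective M n x eps Bstar D \<gamma> B = integral\<^sup>L M (\<lambda>\<omega>.
      1 / (2 * real n) * (\<Sum>i<n. \<Sum>c\<in>UNIV. (resp x eps Bstar i \<omega> c - x i \<omega> \<bullet> B c)\<^sup>2)
    + \<gamma> / (2 * real n) * (\<Sum>q\<in>D. 1 / real (card q) *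
          (\<Sum>l\<in>q. \<Sum>m\<in>q. \<Sum>i<n. (x i \<omega> \<bullet> (B l - B m))\<^sup>2)))"

text \<open>Independence of two random variables with values in possibly different
  measurable spaces (the library's indep_var requires a common type): the
  sigma-algebras they generate are independent (cf. prob_space.indep_var_eq).\<close>
definition indep_rv :: "'w measure \<Rightarrow> 'a measure \<Rightarrow> ('w \<Rightarrow> 'a) \<Rightarrow> 'b measure \<Rightarrow> ('w \<Rightarrow> 'b) \<Rightarrow> bool" where
  "indep_rv M S X T Y \<longleftrightarrow>
     X \<in> measurable M S \<and> Y \<in> measurable M T \<and>
     prob_space.indep_set M
       (sigma_sets (space M) {X -` A \<inter> space M | A. A \<in> sets S})
       (sigma_sets (space M) {Y -` A \<inter> space M | A. A \<in> sets T})"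

end

theory Submission
  imports Defs
begin

lemma indep_comp:
  assumes P: "prob_space M" and I: "indep_rv M S X T Y"
    and f: "f \<in> measurable S (borel::real measure)" and g: "g \<in> measurable T (borel::real measure)"
  shows "prob_space.indep_var M borel (\<lambda>\<omega>. f (X \<omega>)) borel (\<lambda>\<omega>. g (Y \<omega>))"
proof -
  interpret prob_space M by fact
  have X: "X \<in> measurable M S" and Y: "Y \<in> measurable M T"
    and ind: "indep_set (sigma_sets (space M) {X -` A \<inter> space M | A. A \<in> sets S})
       (sigma_sets (space M) {Y -` A \<inter> space M | A. A \<in> sets T})"
    using I unfolding indep_rv_def by auto
  have fX: "(\<lambda>\<omega>. f (X \<omega>)) \<in> borel_measurable M" using X f by measurable
  have gY: "(\<lambda>\<omega>. g (Y \<omega>)) \<in> borel_measurable M" using Y g by measurable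
  have s1: "{(\<lambda>\<omega>. f (X \<omega>)) -` A \<inter> space M | A. A \<in> sets borel} \<subseteq> {X -` A \<inter> space M | A. A \<in> sets S}"
  proof safe
    fix A :: "real set" assume "A \<in> sets borel"
    then have "f -` A \<inter> space S \<in> sets S" using f by (auto simp: measurable_def)
    moreover have "(\<lambda>\<omega>. f (X \<omega>)) -` A \<inter> space M = X -` (f -` A \<inter> space S) \<inter> space M"
      using X by (auto simp: measurable_def)
    ultimately show "\<exists>B. (\<lambda>\<omega>. f (X \<omega>)) -` A \<inter> space M = X -` B \<inter> space M \<and> B \<in> sets S" by blast
  qed
  have s2: "{(\<lambda>\<omega>. g (Y \<omega>)) -` A \<inter> space M | A. A \<in> sets borel} \<subseteq> {Y -` A \<inter> space M | A. A \<in> sets T}"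
  proof safe
    fix A :: "real set" assume "A \<in> sets borel"
    then have "g -` A \<inter> space T \<in> sets T" using g by (auto simp: measurable_def)
    moreover have "(\<lambda>\<omega>. g (Y \<omega>)) -` A \<inter> space M = Y -` (g -` A \<inter> space T) \<inter> space M"
      using Y by (auto simp: measurable_def)
    ultimately show "\<exists>B. (\<lambda>\<omega>. g (Y \<omega>)) -` A \<inter> space M = Y -` B \<inter> space M \<and> B \<in> sets T" by blast
  qed
  show ?thesis unfolding indep_var_eq
    using fX gY ind sigma_sets_mono'[OF s1, of "space M"] sigma_sets_mono'[OF s2, of "space M"]
    unfolding indep_sets2_eq by blast
qed


lemma sum_part:
  fixes f :: "'r::finite \<Rightarrow> 'a::comm_monoid_add"
  assumes "partition_on UNIV D"
  shows "sum f UNIV = (\<Sum>q\<in>D. sum f q)"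
proof -
  have U: "UNIV = \<Union>D" using partition_onD1[OF assms] by simp
  have d: "\<forall>A\<in>D. \<forall>B\<in>D. A \<noteq> B \<longrightarrow> A \<inter> B = {}"
    using partition_onD2[OF assms] by (auto simp: disjoint_def)
  have "sum f (\<Union>D) = (sum \<circ> sum) f D"
    by (rule sum.Union_disjoint) (use d in auto)
  then show ?thesis by (simp add: U[symmetric])
qed

lemma antisym_sum:
  fixes a :: "'r \<Rightarrow> 'r \<Rightarrow> real"
  assumes "\<And>l m. a l m = - a m l"
  shows "(\<Sum>l\<in>q. \<Sum>m\<in>q. a l m * (w l - w m)) = 2 * (\<Sum>l\<in>q. \<Sum>m\<in>q. a l m * w l)"
proof -
  have "(\<Sum>l\<in>q. \<Sum>m\<in>q. a l m * w m) = (\<Sum>m\<in>q. \<Sum>l\<in>q. a l m * w m)" by (rule sum.swap)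
  also have "\<dots> = - (\<Sum>m\<in>q. \<Sum>l\<in>q. a m l * w m)"
  proof -
    have "\<And>l m. a l m * w m = - (a m l * w m)" using assms by (metis mult_minus_left)
    then show ?thesis by (simp add: sum_negf[symmetric])
  qed
  finally have "(\<Sum>l\<in>q. \<Sum>m\<in>q. a l m * w m) = - (\<Sum>l\<in>q. \<Sum>m\<in>q. a l m * w l)" .
  then show ?thesis by (simp add: right_diff_distrib sum_subtractf)
qed

definition B0 :: "'r set set \<Rightarrow> real \<Rightarrow> ('r \<Rightarrow> real^'p) \<Rightarrow> 'r \<Rightarrow> real^'p" where
  "B0 D \<gamma> Bs l = (let q = (THE q. q \<in> D \<and> l \<in> q) in
     Bs l + (2 * \<gamma> / ((1 + 2 * \<gamma>) * real (card q))) *\<^sub>R (\<Sum>c\<in>q - {l}. Bs c - Bs l))"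

lemma blk_eq:
  assumes "partition_on UNIV D" "q \<in> D" "l \<in> q"
  shows "(THE q. q \<in> D \<and> l \<in> q) = q"
proof (rule the_equality)
  show "q \<in> D \<and> l \<in> q" using assms by auto
  fix q' assume "q' \<in> D \<and> l \<in> q'"
  then show "q' = q" using partition_onD2[OF assms(1)] assms(2,3)
    by (auto simp: disjoint_def)
qed

lemma B0_eq:
  assumes "partition_on UNIV D" "q \<in> D" "l \<in> q"
  shows "B0 D \<gamma> Bs l = Bs l + (2 * \<gamma> / ((1 + 2 * \<gamma>) * real (card q))) *\<^sub>R (\<Sum>c\<in>q - {l}. Bs c - Bs l)"
  using blk_eq[OF assms] by (simp add: B0_def)

lemma B0_block:
  fixes Bs :: "'r::finite \<Rightarrow> real^'p::finite"
  assumes part: "partition_on UNIV D" and q: "q \<in> D" and c: "c \<in> q" and g: "\<gamma> \<ge> 0"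
  shows "Bs c - B0 D \<gamma> Bs c = (2 * \<gamma> / real (card q)) *\<^sub>R (\<Sum>m\<in>q. B0 D \<gamma> Bs c - B0 D \<gamma> Bs m)"
proof -
  have qne: "q \<noteq> {}" using partition_onD3[OF part] q by auto
  have fq: "finite q" by simp
  define k where "k = real (card q)"
  have k: "k > 0" using qne fq by (simp add: k_def card_gt_0_iff)
  define a where "a = 2 * \<gamma> / ((1 + 2 * \<gamma>) * k)"
  show ?thesis
  proof (subst vec_eq_iff, intro allI)
    fix j
    define b where "b m = Bs m $ j" for m
    define S where "S = (\<Sum>m\<in>q. b m)"
    have rem: "(\<Sum>m'\<in>q - {m}. b m' - b m) = S - k * b m" if "m \<in> q" for m
    proof -
      have "(\<Sum>m'\<in>q. b m' - b m) = (b m - b m) + (\<Sum>m'\<in>q - {m}. b m' - b m)"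
        using that fq by (simp add: sum.remove)
      then show ?thesis by (simp add: sum_subtractf S_def k_def)
    qed
    have B0j: "B0 D \<gamma> Bs m $ j = b m + a * (S - k * b m)" if "m \<in> q" for m
      using B0_eq[OF part q that, of \<gamma> Bs] rem[OF that]
      by (simp add: a_def k_def b_def sum_component)
    have sB0: "(\<Sum>m\<in>q. B0 D \<gamma> Bs m $ j) = S"
    proof -
      have "(\<Sum>m\<in>q. B0 D \<gamma> Bs m $ j) = (\<Sum>m\<in>q. b m + a * (S - k * b m))"
        by (rule sum.cong) (auto simp: B0j)
      also have "\<dots> = S + a * (k * S - k * S)"
        by (simp add: sum.distrib sum_subtractf sum_distrib_left[symmetric] sum_distrib_right k_def S_def
            algebra_simps)
      finally show ?thesis by simp
    qed
    have "(\<Sum>m\<in>q. B0 D \<gamma> Bs c - B0 D \<gamma> Bs m) $ j = k * B0 D \<gamma> Bs c $ j - S"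
      by (simp only: sum_subtractf vector_minus_component sum_component) (simp add: sB0 k_def)
    then have "((2 * \<gamma> / real (card q)) *\<^sub>R (\<Sum>m\<in>q. B0 D \<gamma> Bs c - B0 D \<gamma> Bs m)) $ j
       = (2 * \<gamma> / k) * (k * (b c + a * (S - k * b c)) - S)"
      by (simp add: B0j[OF c] k_def)
    also have "\<dots> = - a * (S - k * b c)"
    proof -
      have nz: "1 + 2 * \<gamma> \<noteq> 0" using g by simp
      have ak0: "a * k = 2 * \<gamma> / (1 + 2 * \<gamma>)" using k by (simp add: a_def)
      have ak: "a * k - 1 = - 1 / (1 + 2 * \<gamma>)" unfolding ak0 using nz by (simp add: field_simps)
      have "(2 * \<gamma> / k) * (k * (b c + a * (S - k * b c)) - S) = (2 * \<gamma> / k) * (S - k * b c) * (a * k - 1)"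
      proof -
        have "k * (b c + a * (S - k * b c)) - S = (S - k * b c) * (a * k - 1)" by (simp add: algebra_simps)
        then show ?thesis by simp
      qed
      also have "\<dots> = - a * (S - k * b c)" unfolding ak using k nz by (simp add: a_def field_simps)
      finally show ?thesis .
    qed
    also have "\<dots> = (Bs c - B0 D \<gamma> Bs c) $ j" by (simp add: B0j[OF c] b_def)
    finally show "(Bs c - B0 D \<gamma> Bs c) $ j = ((2 * \<gamma> / real (card q)) *\<^sub>R (\<Sum>m\<in>q. B0 D \<gamma> Bs c - B0 D \<gamma> Bs m)) $ j" by simp
  qed
qed


definition gfun :: "real^'p \<Rightarrow> real^'r \<Rightarrow> ('r \<Rightarrow> real^'p) \<Rightarrow> 'r set set \<Rightarrow> real \<Rightarrow> ('r::finite \<Rightarrow> real^'p) \<Rightarrow> real" where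
  "gfun xv e Bs D \<gamma> B = (\<Sum>c\<in>UNIV. (xv \<bullet> Bs c + e $ c - xv \<bullet> B c)\<^sup>2)
     + \<gamma> * (\<Sum>q\<in>D. 1 / real (card q) * (\<Sum>l\<in>q. \<Sum>m\<in>q. (xv \<bullet> (B l - B m))\<^sup>2))"

definition qfun :: "real^'p \<Rightarrow> 'r set set \<Rightarrow> real \<Rightarrow> ('r::finite \<Rightarrow> real^'p) \<Rightarrow> real" where
  "qfun xv D \<gamma> H = (\<Sum>c\<in>UNIV. (xv \<bullet> H c)\<^sup>2)
     + \<gamma> * (\<Sum>q\<in>D. 1 / real (card q) * (\<Sum>l\<in>q. \<Sum>m\<in>q. (xv \<bullet> (H l - H m))\<^sup>2))"

lemma lin_zero:
  fixes Bs H :: "'r::finite \<Rightarrow> real^'p::finite"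
  assumes part: "partition_on UNIV D" and g: "\<gamma> \<ge> 0"
  shows "(\<Sum>c\<in>UNIV. (xv \<bullet> (Bs c - B0 D \<gamma> Bs c)) * (xv \<bullet> H c))
    = \<gamma> * (\<Sum>q\<in>D. 1 / real (card q) * (\<Sum>l\<in>q. \<Sum>m\<in>q.
          (xv \<bullet> (B0 D \<gamma> Bs l - B0 D \<gamma> Bs m)) * (xv \<bullet> (H l - H m))))"
proof -
  define a where "a l m = xv \<bullet> (B0 D \<gamma> Bs l - B0 D \<gamma> Bs m)" for l m
  define w where "w l = xv \<bullet> H l" for l
  have anti: "a l m = - a m l" for l m by (simp add: a_def inner_diff_right)
  have "(\<Sum>c\<in>UNIV. (xv \<bullet> (Bs c - B0 D \<gamma> Bs c)) * (xv \<bullet> H c))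
     = (\<Sum>q\<in>D. \<Sum>c\<in>q. (xv \<bullet> (Bs c - B0 D \<gamma> Bs c)) * (xv \<bullet> H c))"
    by (rule sum_part[OF part])
  also have "\<dots> = (\<Sum>q\<in>D. \<gamma> * (1 / real (card q) * (\<Sum>l\<in>q. \<Sum>m\<in>q. a l m * (w l - w m))))"
  proof (rule sum.cong[OF refl])
    fix q assume q: "q \<in> D"
    have "(\<Sum>c\<in>q. (xv \<bullet> (Bs c - B0 D \<gamma> Bs c)) * (xv \<bullet> H c))
        = (\<Sum>c\<in>q. (2 * \<gamma> / real (card q)) * (\<Sum>m\<in>q. a c m) * w c)"
      by (rule sum.cong[OF refl]) (simp add: B0_block[OF part q _ g] inner_sum_right a_def w_def)
    also have "\<dots> = (2 * \<gamma> / real (card q)) * (\<Sum>l\<in>q. \<Sum>m\<in>q. a l m * w l)"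
      by (simp add: sum_distrib_left sum_distrib_right mult.assoc)
    also have "\<dots> = \<gamma> * (1 / real (card q) * (\<Sum>l\<in>q. \<Sum>m\<in>q. a l m * (w l - w m)))"
      by (simp add: antisym_sum[OF anti])
    finally show "(\<Sum>c\<in>q. (xv \<bullet> (Bs c - B0 D \<gamma> Bs c)) * (xv \<bullet> H c))
        = \<gamma> * (1 / real (card q) * (\<Sum>l\<in>q. \<Sum>m\<in>q. a l m * (w l - w m)))" .
  qed
  finally show ?thesis by (simp add: sum_distrib_left a_def w_def inner_diff_right)
qed


lemma g_expand:
  fixes Bs H :: "'r::finite \<Rightarrow> real^'p::finite"
  assumes part: "partition_on UNIV D" and g: "\<gamma> \<ge> 0"
  shows "gfun xv e Bs D \<gamma> (\<lambda>c. B0 D \<gamma> Bs c + H c) = gfun xv e Bs D \<gamma> (B0 D \<gamma> Bs)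
     - 2 * (\<Sum>c\<in>UNIV. e $ c * (xv \<bullet> H c)) + qfun xv D \<gamma> H"
proof -
  let ?B = "B0 D \<gamma> Bs"
  have p1: "(xv \<bullet> Bs c + e $ c - xv \<bullet> (?B c + H c))\<^sup>2 = (xv \<bullet> Bs c + e $ c - xv \<bullet> ?B c)\<^sup>2
     - 2 * ((xv \<bullet> (Bs c - ?B c)) * (xv \<bullet> H c)) - 2 * (e $ c * (xv \<bullet> H c)) + (xv \<bullet> H c)\<^sup>2" for c
    by (simp add: inner_add_right inner_diff_right power2_eq_square algebra_simps)
  have p2: "(xv \<bullet> ((?B l + H l) - (?B m + H m)))\<^sup>2 = (xv \<bullet> (?B l - ?B m))\<^sup>2
     + 2 * ((xv \<bullet> (?B l - ?B m)) * (xv \<bullet> (H l - H m))) + (xv \<bullet> (H l - H m))\<^sup>2" for l m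
    by (simp add: inner_add_right inner_diff_right power2_eq_square algebra_simps)
  have s1: "(\<Sum>c\<in>UNIV. (xv \<bullet> Bs c + e $ c - xv \<bullet> (?B c + H c))\<^sup>2)
     = (\<Sum>c\<in>UNIV. (xv \<bullet> Bs c + e $ c - xv \<bullet> ?B c)\<^sup>2)
     - 2 * (\<Sum>c\<in>UNIV. (xv \<bullet> (Bs c - ?B c)) * (xv \<bullet> H c))
     - 2 * (\<Sum>c\<in>UNIV. e $ c * (xv \<bullet> H c)) + (\<Sum>c\<in>UNIV. (xv \<bullet> H c)\<^sup>2)"
    by (simp only: p1 sum.distrib sum_subtractf sum_distrib_left)
  have s2: "(\<Sum>q\<in>D. 1 / real (card q) * (\<Sum>l\<in>q. \<Sum>m\<in>q. (xv \<bullet> ((?B l + H l) - (?B m + H m)))\<^sup>2))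
     = (\<Sum>q\<in>D. 1 / real (card q) * (\<Sum>l\<in>q. \<Sum>m\<in>q. (xv \<bullet> (?B l - ?B m))\<^sup>2))
     + 2 * (\<Sum>q\<in>D. 1 / real (card q) * (\<Sum>l\<in>q. \<Sum>m\<in>q. (xv \<bullet> (?B l - ?B m)) * (xv \<bullet> (H l - H m))))
     + (\<Sum>q\<in>D. 1 / real (card q) * (\<Sum>l\<in>q. \<Sum>m\<in>q. (xv \<bullet> (H l - H m))\<^sup>2))"
    by (simp only: p2 sum.distrib distrib_left sum_distrib_left mult.left_commute[of 2])
  show ?thesis
    unfolding gfun_def qfun_def s1 s2 lin_zero[OF part g, of xv Bs H]
    by (simp add: algebra_simps)
qed


lemma abs_mult_sq: "\<bar>(a::real) * b\<bar> \<le> a\<^sup>2 + b\<^sup>2"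
proof -
  have "0 \<le> (\<bar>a\<bar> - \<bar>b\<bar>)\<^sup>2" by simp
  then have "2 * (\<bar>a\<bar> * \<bar>b\<bar>) \<le> a\<^sup>2 + b\<^sup>2" by (simp add: power2_eq_square algebra_simps)
  moreover have "0 \<le> \<bar>a\<bar> * \<bar>b\<bar>" by simp
  ultimately have "\<bar>a\<bar> * \<bar>b\<bar> \<le> a\<^sup>2 + b\<^sup>2" by linarith
  then show ?thesis by (simp add: abs_mult)
qed

definition sqi :: "'w measure \<Rightarrow> ('w \<Rightarrow> real) \<Rightarrow> bool" where
  "sqi M f \<longleftrightarrow> f \<in> borel_measurable M \<and> integrable M (\<lambda>w. (f w)\<^sup>2)"

lemma sqi_mult: assumes "sqi M f" "sqi M g" shows "integrable M (\<lambda>w. f w * g w)"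
proof (rule Bochner_Integration.integrable_bound)
  show "integrable M (\<lambda>w. (f w)\<^sup>2 + (g w)\<^sup>2)" using assms by (auto simp: sqi_def)
  show "(\<lambda>w. f w * g w) \<in> borel_measurable M" using assms by (auto simp: sqi_def)
  have "\<bar>f w * g w\<bar> \<le> (f w)\<^sup>2 + (g w)\<^sup>2" for w by (rule abs_mult_sq)
  then show "AE w in M. norm (f w * g w) \<le> norm ((f w)\<^sup>2 + (g w)\<^sup>2)" by auto
qed

lemma sqi_add: assumes "sqi M f" "sqi M g" shows "sqi M (\<lambda>w. f w + g w)"
proof -
  have "integrable M (\<lambda>w. (f w)\<^sup>2 + 2 * (f w * g w) + (g w)\<^sup>2)"
    using assms sqi_mult[OF assms] by (auto simp: sqi_def)
  moreover have "(\<lambda>w. (f w + g w)\<^sup>2) = (\<lambda>w. (f w)\<^sup>2 + 2 * (f w * g w) + (g w)\<^sup>2)"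
    by (simp add: power2_sum algebra_simps)
  ultimately show ?thesis using assms by (auto simp: sqi_def)
qed

lemma sqi_cmult: assumes "sqi M f" shows "sqi M (\<lambda>w. c * f w)"
  using assms by (auto simp: sqi_def power_mult_distrib)

lemma sqi_neg: assumes "sqi M f" shows "sqi M (\<lambda>w. - f w)"
  using assms by (auto simp: sqi_def)

lemma sqi_diff: assumes "sqi M f" "sqi M g" shows "sqi M (\<lambda>w. f w - g w)"
  using sqi_add[OF assms(1) sqi_neg[OF assms(2)]] by simp

lemma sqi_zero: "sqi M (\<lambda>w. 0)" by (simp add: sqi_def)

lemma sqi_sum: assumes "\<And>i. i \<in> I \<Longrightarrow> sqi M (f i)" shows "sqi M (\<lambda>w. \<Sum>i\<in>I. f i w)"
  using assms
proof (induction I rule: infinite_finite_induct)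
  case (insert a F) then show ?case by (simp add: sqi_add)
qed (simp_all add: sqi_zero)

lemma sqi_sq: "sqi M f \<Longrightarrow> integrable M (\<lambda>w. (f w)\<^sup>2)" by (simp add: sqi_def)

lemma sqi_const: "finite_measure M \<Longrightarrow> sqi M (\<lambda>w. c)" by (simp add: sqi_def finite_measure.integrable_const)

lemma sqi_int: assumes "finite_measure M" "sqi M f" shows "integrable M f"
  using sqi_mult[OF assms(2) sqi_const[OF assms(1), of 1]] by simp

lemma inner_sum_vec: "(xv::real^'p::finite) \<bullet> v = (\<Sum>j\<in>UNIV. xv $ j * v $ j)"
  by (simp add: inner_vec_def)


lemma obj_pt:
  fixes x :: "nat \<Rightarrow> 'w \<Rightarrow> real^'p::finite" and eps :: "nat \<Rightarrow> 'w \<Rightarrow> real^'r::finite"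
  shows "1 / (2 * real n) * (\<Sum>i<n. \<Sum>c\<in>UNIV. (resp x eps Bstar i \<omega> c - x i \<omega> \<bullet> B c)\<^sup>2)
    + \<gamma> / (2 * real n) * (\<Sum>q\<in>D. 1 / real (card q) *
          (\<Sum>l\<in>q. \<Sum>m\<in>q. \<Sum>i<n. (x i \<omega> \<bullet> (B l - B m))\<^sup>2))
   = 1 / (2 * real n) * (\<Sum>i<n. gfun (x i \<omega>) (eps i \<omega>) Bstar D \<gamma> B)"
proof -
  define f where "f i l m = (x i \<omega> \<bullet> (B l - B m))\<^sup>2" for i l m
  have sw3: "(\<Sum>l\<in>q. \<Sum>m\<in>q. \<Sum>i<n. f i l m) = (\<Sum>i<n. \<Sum>l\<in>q. \<Sum>m\<in>q. f i l m)" for q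
  proof -
    have "(\<Sum>l\<in>q. \<Sum>m\<in>q. \<Sum>i<n. f i l m) = (\<Sum>l\<in>q. \<Sum>i<n. \<Sum>m\<in>q. f i l m)"
      by (rule sum.cong[OF refl], rule sum.swap)
    also have "\<dots> = (\<Sum>i<n. \<Sum>l\<in>q. \<Sum>m\<in>q. f i l m)" by (rule sum.swap)
    finally show ?thesis .
  qed
  have "(\<Sum>i<n. \<Sum>q\<in>D. 1 / real (card q) * (\<Sum>l\<in>q. \<Sum>m\<in>q. f i l m))
      = (\<Sum>q\<in>D. \<Sum>i<n. 1 / real (card q) * (\<Sum>l\<in>q. \<Sum>m\<in>q. f i l m))" by (rule sum.swap)
  also have "\<dots> = (\<Sum>q\<in>D. 1 / real (card q) * (\<Sum>l\<in>q. \<Sum>m\<in>q. \<Sum>i<n. f i l m))"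
    by (simp add: sw3 sum_distrib_left)
  finally have key: "(\<Sum>i<n. \<Sum>q\<in>D. 1 / real (card q) * (\<Sum>l\<in>q. \<Sum>m\<in>q. f i l m))
      = (\<Sum>q\<in>D. 1 / real (card q) * (\<Sum>l\<in>q. \<Sum>m\<in>q. \<Sum>i<n. f i l m))" .
  show ?thesis
    unfolding gfun_def resp_def sum.distrib sum_distrib_left[of \<gamma>, symmetric] key[unfolded f_def]
    by (simp add: algebra_simps)
qed

lemma quad_pt:
  fixes x :: "nat \<Rightarrow> 'w \<Rightarrow> real^'p::finite" and h :: "real^'p"
  shows "(\<Sum>j\<in>UNIV. \<Sum>k\<in>UNIV. h $ j * ((\<Sum>i<n. x i \<omega> $ j * x i \<omega> $ k) / real n) * h $ k)
     = (\<Sum>i<n. (x i \<omega> \<bullet> h)\<^sup>2) / real n"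
proof -
  define S where "S j k = (\<Sum>i<n. x i \<omega> $ j * x i \<omega> $ k)" for j k
  have e1: "(\<Sum>j\<in>UNIV. \<Sum>k\<in>UNIV. h $ j * (S j k / real n) * h $ k)
     = (\<Sum>j\<in>UNIV. \<Sum>k\<in>UNIV. h $ j * S j k * h $ k) / real n"
    by (simp add: sum_divide_distrib)
  have "(\<Sum>i<n. (x i \<omega> \<bullet> h)\<^sup>2) = (\<Sum>i<n. \<Sum>j\<in>UNIV. \<Sum>k\<in>UNIV. h $ j * (x i \<omega> $ j * x i \<omega> $ k) * h $ k)"
    by (simp add: inner_sum_vec power2_eq_square sum_product mult_ac)
  also have "\<dots> = (\<Sum>j\<in>UNIV. \<Sum>i<n. \<Sum>k\<in>UNIV. h $ j * (x i \<omega> $ j * x i \<omega> $ k) * h $ k)"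
    by (rule sum.swap)
  also have "\<dots> = (\<Sum>j\<in>UNIV. \<Sum>k\<in>UNIV. \<Sum>i<n. h $ j * (x i \<omega> $ j * x i \<omega> $ k) * h $ k)"
    by (rule sum.cong[OF refl], rule sum.swap)
  also have "\<dots> = (\<Sum>j\<in>UNIV. \<Sum>k\<in>UNIV. h $ j * (\<Sum>i<n. x i \<omega> $ j * x i \<omega> $ k) * h $ k)"
    by (simp add: sum_distrib_left sum_distrib_right)
  finally show ?thesis using e1 by (simp only: S_def)
qed


theorem corollary1:
  fixes M :: "'w measure" and n s :: nat
    and x :: "nat \<Rightarrow> 'w \<Rightarrow> real^'p::finite"
    and eps :: "nat \<Rightarrow> 'w \<Rightarrow> real^'r::finite"
    and Bstar Bhat :: "'r \<Rightarrow> real^'p"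
    and D :: "'r set set" and \<gamma> :: real
  assumes "prob_space M" and "n \<ge> 1"
    and sparse: "nnz Bstar = s"
    and x_rv: "\<And>i. i < n \<Longrightarrow> x i \<in> borel_measurable M"
    and eps_rv: "\<And>i. i < n \<Longrightarrow> eps i \<in> borel_measurable M"
    and x_L2: "\<And>i j. i < n \<Longrightarrow> integrable M (\<lambda>\<omega>. (x i \<omega> $ j)\<^sup>2)"
    and eps_L2: "\<And>i c. i < n \<Longrightarrow> integrable M (\<lambda>\<omega>. (eps i \<omega> $ c)\<^sup>2)"
    and eps_mean: "\<And>i c. i < n \<Longrightarrow> integral\<^sup>L M (\<lambda>\<omega>. eps i \<omega> $ c) = 0"
    and indep: "indep_rv M
        (\<Pi>\<^sub>M i\<in>{..<n}. (borel :: (real^'p) measure)) (\<lambda>\<omega>. \<lambda>i\<in>{..<n}. x i \<omega>)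
        (\<Pi>\<^sub>M i\<in>{..<n}. (borel :: (real^'r) measure)) (\<lambda>\<omega>. \<lambda>i\<in>{..<n}. eps i \<omega>)"
    and pd: "pos_def (gram M n x)"
    and part: "partition_on UNIV D"
    and "\<gamma> \<ge> 0"
    and argmin: "\<forall>B. objective M n x eps Bstar D \<gamma> Bhat \<le> objective M n x eps Bstar D \<gamma> B"
  shows "\<forall>q\<in>D. \<forall>l\<in>q. Bhat l = Bstar l +
           (2 * \<gamma> / ((1 + 2 * \<gamma>) * real (card q))) *\<^sub>R (\<Sum>c\<in>q - {l}. Bstar c - Bstar l)"
proof -
  interpret prob_space M by fact
  have fm: "finite_measure M" by (rule finite_measure_axioms)
  have g0: "\<gamma> \<ge> 0" by fact
  have xj: "sqi M (\<lambda>\<omega>. x i \<omega> $ j)" if "i < n" for i j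
    using measurable_compose[OF x_rv[OF that] borel_measurable_nth] x_L2[OF that] by (simp add: sqi_def)
  have ej: "sqi M (\<lambda>\<omega>. eps i \<omega> $ c)" if "i < n" for i c
    using measurable_compose[OF eps_rv[OF that] borel_measurable_nth] eps_L2[OF that] by (simp add: sqi_def)
  have xin: "sqi M (\<lambda>\<omega>. x i \<omega> \<bullet> v)" if "i < n" for i v
  proof -
    have "sqi M (\<lambda>\<omega>. \<Sum>j\<in>UNIV. v $ j * x i \<omega> $ j)"
      by (intro sqi_sum sqi_cmult xj[OF that])
    then show ?thesis by (simp add: inner_sum_vec mult.commute)
  qed
  have gint: "integrable M (\<lambda>\<omega>. gfun (x i \<omega>) (eps i \<omega>) Bstar D \<gamma> B)" if "i < n" for i B
    unfolding gfun_def
    by (intro Bochner_Integration.integrable_add Bochner_Integration.integrable_sum Bochner_Integration.integrable_mult_right sqi_sq sqi_diff sqi_add xin ej that)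
  have qint: "integrable M (\<lambda>\<omega>. qfun (x i \<omega>) D \<gamma> H)" if "i < n" for i H
    unfolding qfun_def
    by (intro Bochner_Integration.integrable_add Bochner_Integration.integrable_sum Bochner_Integration.integrable_mult_right sqi_sq xin that)
  have xeint: "integrable M (\<lambda>\<omega>. eps i \<omega> $ c * (x i \<omega> \<bullet> v))" if "i < n" for i c v
    by (intro sqi_mult ej xin that)
  have xe0: "integral\<^sup>L M (\<lambda>\<omega>. x i \<omega> $ j * eps i \<omega> $ c) = 0" if i: "i < n" for i j c
  proof -
    have c1: "(\<lambda>h. h i) \<in> measurable (\<Pi>\<^sub>M i\<in>{..<n}. (borel :: (real^'p) measure)) borel"
      using i by (intro measurable_component_singleton) auto
    have m1: "(\<lambda>h. h i $ j) \<in> measurable (\<Pi>\<^sub>M i\<in>{..<n}. (borel :: (real^'p) measure)) borel"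
      by (rule measurable_compose[OF c1 borel_measurable_nth])
    have c2: "(\<lambda>h. h i) \<in> measurable (\<Pi>\<^sub>M i\<in>{..<n}. (borel :: (real^'r) measure)) borel"
      using i by (intro measurable_component_singleton) auto
    have m2: "(\<lambda>h. h i $ c) \<in> measurable (\<Pi>\<^sub>M i\<in>{..<n}. (borel :: (real^'r) measure)) borel"
      by (rule measurable_compose[OF c2 borel_measurable_nth])
    have iv: "indep_var borel (\<lambda>\<omega>. x i \<omega> $ j) borel (\<lambda>\<omega>. eps i \<omega> $ c)"
      using indep_comp[OF \<open>prob_space M\<close> indep m1 m2] i by simp
    have "integral\<^sup>L M (\<lambda>\<omega>. x i \<omega> $ j * eps i \<omega> $ c)
        = integral\<^sup>L M (\<lambda>\<omega>. x i \<omega> $ j) * integral\<^sup>L M (\<lambda>\<omega>. eps i \<omega> $ c)"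
      by (rule indep_var_lebesgue_integral[OF iv sqi_int[OF fm xj[OF i]] sqi_int[OF fm ej[OF i]]])
    then show ?thesis using eps_mean[OF i] by simp
  qed
  have lin0: "integral\<^sup>L M (\<lambda>\<omega>. \<Sum>c\<in>UNIV. eps i \<omega> $ c * (x i \<omega> \<bullet> H c)) = 0" if i: "i < n" for i H
  proof -
    have "integral\<^sup>L M (\<lambda>\<omega>. \<Sum>c\<in>UNIV. eps i \<omega> $ c * (x i \<omega> \<bullet> H c))
       = (\<Sum>c\<in>UNIV. integral\<^sup>L M (\<lambda>\<omega>. eps i \<omega> $ c * (x i \<omega> \<bullet> H c)))"
      by (rule Bochner_Integration.integral_sum) (rule xeint[OF i])
    also have "\<dots> = 0"
    proof (rule sum.neutral, rule ballI)
      fix c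
      have "integral\<^sup>L M (\<lambda>\<omega>. eps i \<omega> $ c * (x i \<omega> \<bullet> H c))
          = integral\<^sup>L M (\<lambda>\<omega>. \<Sum>j\<in>UNIV. H c $ j * (x i \<omega> $ j * eps i \<omega> $ c))"
        by (simp add: inner_sum_vec sum_distrib_left mult_ac)
      also have "\<dots> = (\<Sum>j\<in>UNIV. H c $ j * integral\<^sup>L M (\<lambda>\<omega>. x i \<omega> $ j * eps i \<omega> $ c))"
        by (subst Bochner_Integration.integral_sum) (auto intro!: sqi_mult xj ej i)
      also have "\<dots> = 0" by (simp add: xe0[OF i])
      finally show "integral\<^sup>L M (\<lambda>\<omega>. eps i \<omega> $ c * (x i \<omega> \<bullet> H c)) = 0" .
    qed
    finally show ?thesis .
  qed
  define B0' where "B0' = B0 D \<gamma> Bstar"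
  define H where "H c = Bhat c - B0' c" for c
  have Bh: "Bhat = (\<lambda>c. B0' c + H c)" by (simp add: H_def fun_eq_iff)
  have npos: "real n > 0" using \<open>n \<ge> 1\<close> by simp
  define Gi where "Gi i B = integral\<^sup>L M (\<lambda>\<omega>. gfun (x i \<omega>) (eps i \<omega>) Bstar D \<gamma> B)" for i B
  have objG: "objective M n x eps Bstar D \<gamma> B = 1 / (2 * real n) * (\<Sum>i<n. Gi i B)" for B
  proof -
    have "objective M n x eps Bstar D \<gamma> B
       = integral\<^sup>L M (\<lambda>\<omega>. 1 / (2 * real n) * (\<Sum>i<n. gfun (x i \<omega>) (eps i \<omega>) Bstar D \<gamma> B))"
      unfolding objective_def obj_pt ..
    also have "\<dots> = 1 / (2 * real n) * (\<Sum>i<n. Gi i B)"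
    proof -
      have "integral\<^sup>L M (\<lambda>\<omega>. \<Sum>i<n. gfun (x i \<omega>) (eps i \<omega>) Bstar D \<gamma> B) = (\<Sum>i<n. Gi i B)"
        unfolding Gi_def by (rule Bochner_Integration.integral_sum) (rule gint, simp)
      then show ?thesis by simp
    qed
    finally show ?thesis .
  qed
  have expd: "Gi i Bhat = Gi i B0' + integral\<^sup>L M (\<lambda>\<omega>. qfun (x i \<omega>) D \<gamma> H)" if i: "i < n" for i
  proof -
    have "Gi i Bhat = integral\<^sup>L M (\<lambda>\<omega>. gfun (x i \<omega>) (eps i \<omega>) Bstar D \<gamma> B0'
        - 2 * (\<Sum>c\<in>UNIV. eps i \<omega> $ c * (x i \<omega> \<bullet> H c)) + qfun (x i \<omega>) D \<gamma> H)"
      unfolding Gi_def Bh B0'_def g_expand[OF part g0] ..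
    also have "\<dots> = Gi i B0' - 2 * integral\<^sup>L M (\<lambda>\<omega>. \<Sum>c\<in>UNIV. eps i \<omega> $ c * (x i \<omega> \<bullet> H c))
        + integral\<^sup>L M (\<lambda>\<omega>. qfun (x i \<omega>) D \<gamma> H)"
      unfolding Gi_def
      by (subst Bochner_Integration.integral_add, (intro Bochner_Integration.integrable_diff
          Bochner_Integration.integrable_mult_right Bochner_Integration.integrable_sum xeint gint qint i)+)
         (subst Bochner_Integration.integral_diff, (intro Bochner_Integration.integrable_mult_right
          Bochner_Integration.integrable_sum xeint gint qint i)+, simp)
    finally show ?thesis using lin0[OF i] by simp
  qed
  define quad where "quad h = (\<Sum>j\<in>UNIV. \<Sum>k\<in>UNIV. h $ j * gram M n x j k * h $ k)" for h :: "real^'p"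
  have quad_nn: "quad h \<ge> 0" for h
  proof (cases "h = 0")
    case True then show ?thesis by (simp add: quad_def)
  next
    case False then show ?thesis using pd by (simp add: pos_def_def quad_def less_imp_le)
  qed
  have Fint: "integrable M (\<lambda>\<omega>. (\<Sum>i<n. x i \<omega> $ j * x i \<omega> $ k) / real n)" for j k
    by (intro Bochner_Integration.integrable_divide Bochner_Integration.integrable_sum sqi_mult xj) auto
  have gq: "(\<Sum>i<n. integral\<^sup>L M (\<lambda>\<omega>. (x i \<omega> \<bullet> h)\<^sup>2)) = real n * quad h" for h
  proof -
    have "quad h = integral\<^sup>L M (\<lambda>\<omega>. \<Sum>j\<in>UNIV. \<Sum>k\<in>UNIV. h $ j * ((\<Sum>i<n. x i \<omega> $ j * x i \<omega> $ k) / real n) * h $ k)"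
      unfolding quad_def gram_def
      by (subst Bochner_Integration.integral_sum, (intro Bochner_Integration.integrable_sum
            Bochner_Integration.integrable_mult_right Bochner_Integration.integrable_mult_left Fint)+,
          intro sum.cong refl, subst Bochner_Integration.integral_sum,
          (intro Bochner_Integration.integrable_mult_right Bochner_Integration.integrable_mult_left Fint)+, simp)
    also have "\<dots> = integral\<^sup>L M (\<lambda>\<omega>. (\<Sum>i<n. (x i \<omega> \<bullet> h)\<^sup>2) / real n)"
      by (simp only: quad_pt)
    also have "\<dots> = (\<Sum>i<n. integral\<^sup>L M (\<lambda>\<omega>. (x i \<omega> \<bullet> h)\<^sup>2)) / real n"
    proof -
      have "integral\<^sup>L M (\<lambda>\<omega>. \<Sum>i<n. (x i \<omega> \<bullet> h)\<^sup>2) = (\<Sum>i<n. integral\<^sup>L M (\<lambda>\<omega>. (x i \<omega> \<bullet> h)\<^sup>2))"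
        by (rule Bochner_Integration.integral_sum) (rule sqi_sq, rule xin, simp)
      then show ?thesis by simp
    qed
    finally show ?thesis using npos by (simp add: field_simps)
  qed
  have qge: "integral\<^sup>L M (\<lambda>\<omega>. qfun (x i \<omega>) D \<gamma> H) \<ge> (\<Sum>c\<in>UNIV. integral\<^sup>L M (\<lambda>\<omega>. (x i \<omega> \<bullet> H c)\<^sup>2))"
    if i: "i < n" for i
  proof -
    have "(\<Sum>c\<in>UNIV. integral\<^sup>L M (\<lambda>\<omega>. (x i \<omega> \<bullet> H c)\<^sup>2)) = integral\<^sup>L M (\<lambda>\<omega>. \<Sum>c\<in>UNIV. (x i \<omega> \<bullet> H c)\<^sup>2)"
      by (rule Bochner_Integration.integral_sum[symmetric], rule sqi_sq, rule xin[OF i])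
    also have "\<dots> \<le> integral\<^sup>L M (\<lambda>\<omega>. qfun (x i \<omega>) D \<gamma> H)"
    proof (rule integral_mono)
      show "integrable M (\<lambda>\<omega>. \<Sum>c\<in>UNIV. (x i \<omega> \<bullet> H c)\<^sup>2)"
        by (intro Bochner_Integration.integrable_sum sqi_sq xin i)
      show "integrable M (\<lambda>\<omega>. qfun (x i \<omega>) D \<gamma> H)" by (rule qint[OF i])
      fix \<omega>
      have "0 \<le> \<gamma> * (\<Sum>q\<in>D. 1 / real (card q) * (\<Sum>l\<in>q. \<Sum>m\<in>q. (x i \<omega> \<bullet> (H l - H m))\<^sup>2))"
        using g0 by (intro mult_nonneg_nonneg sum_nonneg) auto
      then show "(\<Sum>c\<in>UNIV. (x i \<omega> \<bullet> H c)\<^sup>2) \<le> qfun (x i \<omega>) D \<gamma> H"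
        unfolding qfun_def by linarith
    qed
    finally show ?thesis .
  qed
  have "objective M n x eps Bstar D \<gamma> Bhat \<le> objective M n x eps Bstar D \<gamma> B0'"
    using argmin by blast
  then have "(\<Sum>i<n. Gi i Bhat) \<le> (\<Sum>i<n. Gi i B0')"
    unfolding objG using npos by (simp add: divide_le_cancel)
  then have "(\<Sum>i<n. integral\<^sup>L M (\<lambda>\<omega>. qfun (x i \<omega>) D \<gamma> H)) \<le> 0"
    by (simp add: expd sum.distrib)
  moreover have "(\<Sum>i<n. integral\<^sup>L M (\<lambda>\<omega>. qfun (x i \<omega>) D \<gamma> H))
      \<ge> (\<Sum>i<n. \<Sum>c\<in>UNIV. integral\<^sup>L M (\<lambda>\<omega>. (x i \<omega> \<bullet> H c)\<^sup>2))"
    by (rule sum_mono) (simp add: qge)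
  moreover have "(\<Sum>i<n. \<Sum>c\<in>UNIV. integral\<^sup>L M (\<lambda>\<omega>. (x i \<omega> \<bullet> H c)\<^sup>2)) = real n * (\<Sum>c\<in>UNIV. quad (H c))"
    by (subst sum.swap) (simp add: gq sum_distrib_left)
  ultimately have "real n * (\<Sum>c\<in>UNIV. quad (H c)) \<le> 0" by linarith
  then have "(\<Sum>c\<in>UNIV. quad (H c)) \<le> 0" using npos by (simp add: mult_le_0_iff)
  then have "(\<Sum>c\<in>UNIV. quad (H c)) = 0" using quad_nn by (meson antisym sum_nonneg)
  then have q0: "quad (H c) = 0" for c using quad_nn by (simp add: sum_nonneg_eq_0_iff)
  have H0: "H c = 0" for c
  proof (rule ccontr)
    assume "H c \<noteq> 0"
    then have "quad (H c) > 0" using pd by (simp add: pos_def_def quad_def)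
    then show False using q0[of c] by simp
  qed
  show ?thesis
  proof (intro ballI)
    fix q l assume "q \<in> D" "l \<in> q"
    have "Bhat l = B0' l" using H0[of l] by (simp add: H_def)
    then show "Bhat l = Bstar l +
           (2 * \<gamma> / ((1 + 2 * \<gamma>) * real (card q))) *\<^sub>R (\<Sum>c\<in>q - {l}. Bstar c - Bstar l)"
      using B0_eq[OF part \<open>q \<in> D\<close> \<open>l \<in> q\<close>] by (simp add: B0'_def)
  qed
qed

end
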